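(* Let $T$ be a tree with $p\ge 3$ pendant vertices and let $u_1,u_2,u_3$ be three distinct pendant vertices of $T$. Let $H=\bigcup_{1\le i<j\le 3}P_{u_i,u_j}$ be the minimal subtree of $T$ containing these three vertices. If $m(T,1)\ge p-2$, then $m(H,1)\ge 1$.
   Context: $m(G,\lambda)$ denotes the multiplicity of $\lambda$ as an eigenvalue of the Laplacian matrix $L(G)=D(G)-A(G)$ (zero if not an eigenvalue). A pendant vertex has degree $1$. $P_{r,s}$ is the path in $T$ from $r$ to $s$. *)

theory Defs
  imports "Jordan_Normal_Form.Char_Poly"
begin

text \<open>Simple graphs: a finite vertex set V and a symmetric irreflexive adjacency
  relation E; only adjacencies between vertices of V are taken into account.\<close>

definition simple_graph :: "'a set \<Rightarrow> ('a \<Rightarrow> 'a \<Rightarrow> bool) \<Rightarrow> bool" where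
  "simple_graph V E \<longleftrightarrow> finite V \<and> (\<forall>u v. E u v \<longrightarrow> E v u) \<and> (\<forall>v. \<not> E v v)"

definition degree :: "'a set \<Rightarrow> ('a \<Rightarrow> 'a \<Rightarrow> bool) \<Rightarrow> 'a \<Rightarrow> nat" where
  "degree V E v = card {w \<in> V. E v w}"

definition pendant :: "'a set \<Rightarrow> ('a \<Rightarrow> 'a \<Rightarrow> bool) \<Rightarrow> 'a \<Rightarrow> bool" where
  "pendant V E v \<longleftrightarrow> v \<in> V \<and> degree V E v = 1"

definition walk :: "'a set \<Rightarrow> ('a \<Rightarrow> 'a \<Rightarrow> bool) \<Rightarrow> 'a list \<Rightarrow> bool" where
  "walk V E xs \<longleftrightarrow> xs \<noteq> [] \<and> set xs \<subseteq> V \<and> (\<forall>i. Suc i < length xs \<longrightarrow> E (xs ! i) (xs ! Suc i))"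

definition connected_graph :: "'a set \<Rightarrow> ('a \<Rightarrow> 'a \<Rightarrow> bool) \<Rightarrow> bool" where
  "connected_graph V E \<longleftrightarrow> V \<noteq> {} \<and>
     (\<forall>u\<in>V. \<forall>v\<in>V. \<exists>xs. walk V E xs \<and> hd xs = u \<and> last xs = v)"

definition has_cycle :: "'a set \<Rightarrow> ('a \<Rightarrow> 'a \<Rightarrow> bool) \<Rightarrow> bool" where
  "has_cycle V E \<longleftrightarrow> (\<exists>xs. walk V E xs \<and> length xs \<ge> 3 \<and> distinct xs \<and> E (last xs) (hd xs))"

definition is_tree :: "'a set \<Rightarrow> ('a \<Rightarrow> 'a \<Rightarrow> bool) \<Rightarrow> bool" where
  "is_tree V E \<longleftrightarrow> simple_graph V E \<and> connected_graph V E \<and> \<not> has_cycle V E"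

text \<open>Vertex set of the path P_{r,s} (in a tree the path is unique).\<close>
definition path_vertices :: "'a set \<Rightarrow> ('a \<Rightarrow> 'a \<Rightarrow> bool) \<Rightarrow> 'a \<Rightarrow> 'a \<Rightarrow> 'a set" where
  "path_vertices V E r s = {x. \<exists>xs. walk V E xs \<and> distinct xs \<and> hd xs = r \<and> last xs = s \<and> x \<in> set xs}"

text \<open>Laplacian matrix L = D - A of the graph induced on V (vertices ordered increasingly).\<close>
definition laplacian :: "'a::linorder set \<Rightarrow> ('a \<Rightarrow> 'a \<Rightarrow> bool) \<Rightarrow> real mat" where
  "laplacian V E = (let xs = sorted_list_of_set V in
     mat (card V) (card V) (\<lambda>(i, j).
        if i = j then real (degree V E (xs ! i))
        else if E (xs ! i) (xs ! j) then -1 else 0))"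

text \<open>m(G, lambda): multiplicity of lambda as a root of the characteristic polynomial of L(G)
  (0 if lambda is not an eigenvalue).\<close>
definition lap_mult :: "'a::linorder set \<Rightarrow> ('a \<Rightarrow> 'a \<Rightarrow> bool) \<Rightarrow> real \<Rightarrow> nat" where
  "lap_mult V E c = order c (char_poly (laplacian V E))"

end

theory Submission
  imports Defs "Jordan_Normal_Form.Jordan_Normal_Form_Uniqueness" "Jordan_Normal_Form.Jordan_Normal_Form_Existence"
begin


lemma mat_vec_zero: "A \<in> carrier_mat nr n \<Longrightarrow> A *\<^sub>v 0\<^sub>v n = (0\<^sub>v nr :: 'a::comm_ring_1 vec)"
  by (intro eq_vecI) (auto simp: scalar_prod_def)

lemma herm_sq: fixes C :: "complex mat"
  assumes C: "C \<in> carrier_mat n n" and h: "\<And>i j. i < n \<Longrightarrow> j < n \<Longrightarrow> conjugate (C$$(i,j)) = C$$(j,i)"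
    and v: "v \<in> carrier_vec n" and z: "C *\<^sub>v (C *\<^sub>v v) = 0\<^sub>v n"
  shows "C *\<^sub>v v = 0\<^sub>v n"
proof -
  define u where "u = C *\<^sub>v v"
  have u: "u \<in> carrier_vec n" using C v u_def by auto
  have ui: "\<And>i. i < n \<Longrightarrow> u $ i = (\<Sum>j<n. C$$(i,j) * v$j)"
    using C v unfolding u_def by (auto simp: scalar_prod_def row_def lessThan_atLeast0)
  have cu: "\<And>j. j < n \<Longrightarrow> (C *\<^sub>v u) $ j = (\<Sum>i<n. C$$(j,i) * u$i)"
    using C u by (auto simp: scalar_prod_def row_def lessThan_atLeast0)
  have "u \<bullet>c u = (\<Sum>i<n. u$i * conjugate (u$i))"
    using u by (simp add: scalar_prod_def lessThan_atLeast0)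
  also have "\<dots> = (\<Sum>i<n. \<Sum>j<n. C$$(i,j) * v$j * conjugate (u$i))"
    by (simp add: ui sum_distrib_right)
  also have "\<dots> = (\<Sum>j<n. \<Sum>i<n. C$$(i,j) * v$j * conjugate (u$i))"
    by (rule sum.swap)
  also have "\<dots> = (\<Sum>j<n. v$j * conjugate (\<Sum>i<n. C$$(j,i) * u$i))"
  proof (intro sum.cong refl)
    fix j assume j: "j \<in> {..<n}"
    have "conjugate (\<Sum>i<n. C$$(j,i) * u$i) = (\<Sum>i<n. conjugate (C$$(j,i)) * conjugate (u$i))"
      by (simp add: conjugate_complex_def)
    also have "\<dots> = (\<Sum>i<n. C$$(i,j) * conjugate (u$i))"
      using j by (intro sum.cong refl) (simp add: h[unfolded conjugate_complex_def])
    finally show "(\<Sum>i<n. C$$(i,j) * v$j * conjugate (u$i)) = v$j * conjugate (\<Sum>i<n. C$$(j,i) * u$i)"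
      by (simp add: sum_distrib_left mult_ac)
  qed
  also have "\<dots> = v \<bullet>c (C *\<^sub>v u)"
    using v C u by (simp add: scalar_prod_def lessThan_atLeast0 cu)
  also have "C *\<^sub>v u = 0\<^sub>v n" using z u_def by simp
  also have "v \<bullet>c 0\<^sub>v n = 0" using v by (simp add: scalar_prod_def)
  finally have "u \<bullet>c u = 0" .
  thus ?thesis using conjugate_square_eq_0_vec[OF u] u_def by simp
qed

lemma herm_kernel_pow: fixes C :: "complex mat"
  assumes C: "C \<in> carrier_mat n n" and h: "\<And>i j. i < n \<Longrightarrow> j < n \<Longrightarrow> conjugate (C$$(i,j)) = C$$(j,i)"
  shows "mat_kernel (C ^\<^sub>m Suc k) = mat_kernel C"
proof (induction k)
  case 0
  have "C ^\<^sub>m Suc 0 = C" using C by simp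
  then show ?case by simp
next
  case (Suc k)
  have P: "C ^\<^sub>m Suc k \<in> carrier_mat n n" using C by (rule pow_carrier_mat)
  have P2: "C ^\<^sub>m Suc (Suc k) \<in> carrier_mat n n" using C by (rule pow_carrier_mat)
  have eq: "\<And>v. v \<in> carrier_vec n \<Longrightarrow> C ^\<^sub>m Suc (Suc k) *\<^sub>v v = C ^\<^sub>m Suc k *\<^sub>v (C *\<^sub>v v)"
    using C P by (simp add: assoc_mult_mat_vec)
  show ?case
  proof (rule subset_antisym; rule subsetI)
    fix v assume "v \<in> mat_kernel (C ^\<^sub>m Suc (Suc k))"
    hence v: "v \<in> carrier_vec n" and z: "C ^\<^sub>m Suc (Suc k) *\<^sub>v v = 0\<^sub>v n"
      using mat_kernelD[OF P2] by auto
    have "C *\<^sub>v v \<in> mat_kernel (C ^\<^sub>m Suc k)"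
      using mat_kernelI[OF P, of "C *\<^sub>v v"] z eq[OF v] C v by auto
    hence "C *\<^sub>v v \<in> mat_kernel C" using Suc by simp
    hence "C *\<^sub>v (C *\<^sub>v v) = 0\<^sub>v n" using mat_kernelD[OF C] by auto
    from herm_sq[OF C h v this] show "v \<in> mat_kernel C" using mat_kernelI[OF C v] by auto
  next
    fix v assume "v \<in> mat_kernel C"
    hence v: "v \<in> carrier_vec n" and z: "C *\<^sub>v v = 0\<^sub>v n" using mat_kernelD[OF C] by auto
    have "C ^\<^sub>m Suc k *\<^sub>v (C *\<^sub>v v) = 0\<^sub>v n" unfolding z using P by (rule mat_vec_zero)
    thus "v \<in> mat_kernel (C ^\<^sub>m Suc (Suc k))" using eq[OF v] mat_kernelI[OF P2 v] by auto
  qed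
qed


lemma dim_inj: fixes M :: "'a::field mat"
  assumes M: "M \<in> carrier_mat nr nc" and S: "S \<subseteq> {..<nc}"
    and inj: "\<And>v. v \<in> mat_kernel M \<Longrightarrow> (\<forall>i\<in>S. v $ i = 0) \<Longrightarrow> v = 0\<^sub>v nc"
  shows "kernel_dim M \<le> card S"
proof -
  interpret K: kernel nr nc M by (unfold_locales, rule M)
  define s where "s = card S"
  define es where "es = sorted_list_of_set S"
  have finS: "finite S" using S finite_subset by blast
  have les: "length es = s" unfolding es_def s_def by simp
  have ses: "set es = S" unfolding es_def using finS by simp
  have esi: "\<And>j. j < s \<Longrightarrow> es ! j \<in> S" using les ses nth_mem by blast
  have Sin: "\<And>i. i \<in> S \<Longrightarrow> \<exists>j<s. es ! j = i" using les ses by (metis in_set_conv_nth)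
  interpret W: vec_space "TYPE('a)" s .
  define T where "T = (\<lambda>v :: 'a vec. vec s (\<lambda>j. v $ (es ! j)))"
  obtain B where finB: "finite B" and bas: "K.basis B" using kernel_basis_exists[OF M] by auto
  have dimB: "kernel_dim M = card B" using K.Ker.dim_basis[OF finB bas] by simp
  have BK: "B \<subseteq> mat_kernel M" and liB: "\<not> K.lin_dep B" using bas K.Ker.basis_def by auto
  have KC: "mat_kernel M \<subseteq> carrier_vec nc" using mat_kernel[OF M] by auto
  have Tz: "\<And>x. x \<in> carrier_vec nc \<Longrightarrow> T x = 0\<^sub>v s \<Longrightarrow> \<forall>i\<in>S. x $ i = 0"
  proof
    fix x i assume x: "x \<in> carrier_vec nc" and T0: "T x = 0\<^sub>v s" and i: "i \<in> S"
    obtain j where j: "j < s" "es ! j = i" using Sin[OF i] by auto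
    have "T x $ j = x $ i" unfolding T_def using j by simp
    thus "x $ i = 0" using T0 j by simp
  qed
  have injT: "inj_on T B"
  proof (rule inj_onI)
    fix x y assume x: "x \<in> B" and y: "y \<in> B" and eq: "T x = T y"
    have xk: "x \<in> mat_kernel M" and yk: "y \<in> mat_kernel M" using x y BK by auto
    have xc: "x \<in> carrier_vec nc" and yc: "y \<in> carrier_vec nc" using xk yk KC by auto
    have "M *\<^sub>v (x - y) = M *\<^sub>v x - M *\<^sub>v y" using M xc yc by (simp add: mult_minus_distrib_mat_vec)
    also have "\<dots> = 0\<^sub>v nr" using mat_kernelD[OF M xk] mat_kernelD[OF M yk] by simp
    finally have dk: "x - y \<in> mat_kernel M" using mat_kernelI[OF M] xc yc by simp
    have "T (x - y) = 0\<^sub>v s"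
    proof (intro eq_vecI)
      fix j assume "j < dim_vec (0\<^sub>v s :: 'a vec)"
      hence j: "j < s" by simp
      have "es ! j < nc" using esi[OF j] S by auto
      hence "T (x - y) $ j = T x $ j - T y $ j" unfolding T_def using j xc yc by simp
      thus "T (x - y) $ j = 0\<^sub>v s $ j" using eq j by simp
    qed (simp add: T_def)
    hence "x - y = 0\<^sub>v nc" using inj[OF dk] Tz[of "x - y"] xc yc by simp
    show "x = y"
    proof (intro eq_vecI)
      fix i assume "i < dim_vec y"
      hence i: "i < nc" using yc by simp
      have "(x - y) $ i = x $ i - y $ i" using i yc by simp
      thus "x $ i = y $ i" using \<open>x - y = 0\<^sub>v nc\<close> i by simp
    qed (use xc yc in simp)
  qed
  have TB: "T ` B \<subseteq> carrier_vec s" unfolding T_def by auto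
  have li: "\<not> W.lin_dep (T ` B)"
  proof (rule W.finite_lin_indpt2)
    show "finite (T ` B)" using finB by simp
    show "T ` B \<subseteq> carrier_vec s" using TB by simp
    fix a assume "True" and lc: "W.lincomb a (T ` B) = 0\<^sub>v s"
    define c where "c = a \<circ> T"
    define x where "x = K.NC.lincomb c B"
    have xK: "x = K.lincomb c B" unfolding x_def using K.lincomb_same[OF BK] by simp
    have xk: "x \<in> mat_kernel M" unfolding xK
      by (rule K.Ker.lincomb_closed) (use BK in auto)
    have xS: "\<forall>i\<in>S. x $ i = 0"
    proof
      fix i assume i: "i \<in> S"
      obtain j where j: "j < s" "es ! j = i" using Sin[OF i] by auto
      have inc: "i < nc" using i S by auto
      have "x $ i = (\<Sum>b\<in>B. c b * b $ i)" unfolding x_def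
        by (rule K.NC.lincomb_index[OF inc]) (use BK KC in auto)
      also have "\<dots> = (\<Sum>b\<in>B. a (T b) * T b $ j)" unfolding c_def T_def using j by simp
      also have "\<dots> = (\<Sum>w\<in>T ` B. a w * w $ j)" by (simp add: sum.reindex[OF injT])
      also have "\<dots> = W.lincomb a (T ` B) $ j" by (rule W.lincomb_index[symmetric, OF j(1) TB])
      also have "\<dots> = 0" using lc j by simp
      finally show "x $ i = 0" .
    qed
    have x0: "K.lincomb c B = 0\<^sub>v nc" using inj[OF xk xS] xK by simp
    have "\<forall>b\<in>B. c b = 0"
    proof (rule ccontr)
      assume "\<not> (\<forall>b\<in>B. c b = 0)"
      then obtain b where "b \<in> B" "c b \<noteq> 0" by auto
      hence "K.lin_dep B" unfolding K.Ker.lin_dep_def using finB x0 by (auto intro!: exI[of _ B] exI[of _ c])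
      thus False using liB by simp
    qed
    thus "\<forall>v\<in>T ` B. a v = 0" unfolding c_def by simp
  qed
  have "card (T ` B) \<le> W.dim" by (rule W.li_le_dim(2)) (use TB li in auto)
  hence "card B \<le> s" using card_image[OF injT] W.dim_is_n by simp
  thus ?thesis using dimB s_def by simp
qed

lemma ord_real_complex: "Polynomial.order (1::real) p = Polynomial.order (1::complex) (map_poly of_real p)"
proof -
  interpret h: map_poly_inj_idom_divide_hom complex_of_real
    by (unfold_locales)
  show ?thesis using h.order_hom[of 1 p] by simp
qed

lemma sum_list_min_self: "(\<Sum> m \<leftarrow> xs. min (sum_list xs) (m::nat)) = sum_list xs"
proof -
  have "\<And>k. sum_list xs \<le> k \<Longrightarrow> (\<Sum> m \<leftarrow> xs. min k (m::nat)) = sum_list xs"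
    by (induction xs) auto
  thus ?thesis by auto
qed

lemma order_gen_dim: fixes A :: "complex mat" assumes A: "A \<in> carrier_mat n n"
  shows "dim_gen_eigenspace A ev (Polynomial.order ev (char_poly A)) = Polynomial.order ev (char_poly A)"
proof -
  obtain as where "char_poly A = (\<Prod>a\<leftarrow>as. [:- a, 1:])" using char_poly_factorized[OF A] by auto
  from jordan_nf_exists[OF A this] obtain n_as where j: "jordan_nf A n_as" by auto
  have o: "Polynomial.order ev (char_poly A) = sum_list (map fst [(n, e)\<leftarrow>n_as . e = ev])"
    using jordan_nf_order[OF j, of ev] by (simp add: case_prod_beta')
  show ?thesis unfolding dim_gen_eigenspace[OF j] o by (rule sum_list_min_self)
qed

lemma neg_one_mat_vec: "(v::complex vec) \<in> carrier_vec n \<Longrightarrow> ((- 1) \<cdot>\<^sub>m 1\<^sub>m n) *\<^sub>v v = - v"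
proof (intro eq_vecI)
  fix i assume v: "(v::complex vec) \<in> carrier_vec n" and "i < dim_vec (- v)"
  hence i: "i < n" by simp
  have "(((- 1) \<cdot>\<^sub>m 1\<^sub>m n) *\<^sub>v v) $ i = (\<Sum>ia = 0..<n. - ((if i = ia then 1 else 0) * v $ ia))"
    using i v by (auto simp: scalar_prod_def row_def)
  also have "\<dots> = (\<Sum>j\<in>{0..<n}. (if j = i then - v $ j else 0))"
    by (rule sum.cong) auto
  also have "\<dots> = - v $ i" using i by (simp add: sum.delta')
  finally show "(((- 1) \<cdot>\<^sub>m 1\<^sub>m n) *\<^sub>v v) $ i = (- v) $ i" using i v by simp
qed auto

lemma LA_main: fixes A :: "real mat"
  assumes A: "A \<in> carrier_mat n n" and sym: "\<And>i j. i < n \<Longrightarrow> j < n \<Longrightarrow> A$$(i,j) = A$$(j,i)"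
    and S: "S \<subseteq> {..<n}"
    and inj: "\<And>v :: complex vec. v \<in> carrier_vec n \<Longrightarrow> of_real_hom.mat_hom A *\<^sub>v v = v \<Longrightarrow> (\<forall>i\<in>S. v$i = 0) \<Longrightarrow> v = 0\<^sub>v n"
  shows "Polynomial.order 1 (char_poly A) \<le> card S"
proof -
  define Ac :: "complex mat" where "Ac = of_real_hom.mat_hom A"
  have Ac: "Ac \<in> carrier_mat n n" using A unfolding Ac_def by simp
  define ord where "ord = Polynomial.order 1 (char_poly A)"
  have ordc: "ord = Polynomial.order 1 (char_poly Ac)"
    unfolding ord_def Ac_def of_real_hom.char_poly_hom[OF A] by (rule ord_real_complex)
  define C where "C = char_matrix Ac 1"
  have C: "C \<in> carrier_mat n n" unfolding C_def using Ac by (simp add: char_matrix_def)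
  have Cij: "\<And>i j. i < n \<Longrightarrow> j < n \<Longrightarrow> C$$(i,j) = complex_of_real (A$$(i,j)) - (if i = j then 1 else 0)"
    unfolding C_def char_matrix_def Ac_def using A by auto
  have herm: "\<And>i j. i < n \<Longrightarrow> j < n \<Longrightarrow> conjugate (C$$(i,j)) = C$$(j,i)"
    using Cij sym by (auto simp: conjugate_complex_def)
  have kd: "kernel_dim C \<le> card S"
  proof (rule dim_inj[OF C S])
    fix v assume vk: "v \<in> mat_kernel C" and vS: "\<forall>i\<in>S. v $ i = 0"
    have v: "v \<in> carrier_vec n" and z: "C *\<^sub>v v = 0\<^sub>v n" using mat_kernelD[OF C vk] by auto
    have "C *\<^sub>v v = Ac *\<^sub>v v + ((- 1) \<cdot>\<^sub>m 1\<^sub>m n) *\<^sub>v v"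
      unfolding C_def char_matrix_def using Ac v by (simp add: add_mult_distrib_mat_vec)
    also have "((- 1) \<cdot>\<^sub>m 1\<^sub>m n) *\<^sub>v v = - v" using v by (rule neg_one_mat_vec)
    finally have "Ac *\<^sub>v v + - v = 0\<^sub>v n" using z by simp
    hence eq0: "Ac *\<^sub>v v + - v = 0\<^sub>v n" .
    have "Ac *\<^sub>v v = v"
    proof (intro eq_vecI)
      fix i assume "i < dim_vec v"
      hence i: "i < n" using v by simp
      have "(Ac *\<^sub>v v + - v) $ i = (Ac *\<^sub>v v) $ i - v $ i" using i v Ac by simp
      thus "(Ac *\<^sub>v v) $ i = v $ i" using eq0 i by simp
    qed (use v Ac in simp)
    thus "v = 0\<^sub>v n" using inj[OF v] vS unfolding Ac_def by simp
  qed
  show ?thesis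
  proof (cases ord)
    case 0
    then show ?thesis unfolding ord_def by simp
  next
    case (Suc k)
    have "ord = dim_gen_eigenspace Ac 1 ord" using order_gen_dim[OF Ac, of 1] ordc by simp
    also have "\<dots> = kernel_dim (C ^\<^sub>m Suc k)" unfolding dim_gen_eigenspace_def C_def Suc by simp
    also have "\<dots> = kernel_dim C"
    proof -
      have d1: "dim_col (C ^\<^sub>m Suc k) = n" using pow_carrier_mat[OF C, of "Suc k"] by (simp only: carrier_matD)
      have d2: "dim_col C = n" using C by auto
      have mk: "mat_kernel (C ^\<^sub>m Suc k) = mat_kernel C" by (rule herm_kernel_pow[OF C herm])
      show ?thesis unfolding kernel_dim_def d1 d2 mk by (rule refl)
    qed
    finally show ?thesis using kd ord_def by simp
  qed
qed



lemma walk_Nil[simp]: "\<not> walk V E []" by (simp add: walk_def)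

lemma walk_single[simp]: "walk V E [x] \<longleftrightarrow> x \<in> V" by (simp add: walk_def)

lemma walk_Cons2: "walk V E (x # y # ys) \<longleftrightarrow> x \<in> V \<and> E x y \<and> walk V E (y # ys)"
proof
  assume w: "walk V E (x # y # ys)"
  have all: "\<forall>i. Suc i < length (x # y # ys) \<longrightarrow> E ((x # y # ys) ! i) ((x # y # ys) ! Suc i)"
    and sV: "set (x # y # ys) \<subseteq> V" using w unfolding walk_def by blast+
  have "E x y" using spec[OF all, of 0] by simp
  moreover have "walk V E (y # ys)" unfolding walk_def
  proof (intro conjI allI impI)
    fix i assume "Suc i < length (y # ys)"
    then show "E ((y # ys) ! i) ((y # ys) ! Suc i)" using spec[OF all, of "Suc i"] by simp
  qed (use sV in auto)
  ultimately show "x \<in> V \<and> E x y \<and> walk V E (y # ys)" using sV by simp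
next
  assume a: "x \<in> V \<and> E x y \<and> walk V E (y # ys)"
  show "walk V E (x # y # ys)" unfolding walk_def
  proof (intro conjI allI impI)
    show "set (x # y # ys) \<subseteq> V" using a by (simp add: walk_def)
    fix i assume i: "Suc i < length (x # y # ys)"
    show "E ((x # y # ys) ! i) ((x # y # ys) ! Suc i)"
    proof (cases i)
      case 0 then show ?thesis using a by simp
    next
      case (Suc j) then show ?thesis using a i unfolding walk_def by auto
    qed
  qed simp
qed

lemma walk_ConsD: "walk V E (x # ys) \<Longrightarrow> ys \<noteq> [] \<Longrightarrow> walk V E ys \<and> E x (hd ys) \<and> x \<in> V"
  by (cases ys) (auto simp: walk_Cons2)

lemma walk_Cons_hd: "walk V E ys \<Longrightarrow> x \<in> V \<Longrightarrow> E x (hd ys) \<Longrightarrow> walk V E (x # ys)"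
  by (cases ys) (auto simp: walk_Cons2)

lemma walk_hd_in: "walk V E xs \<Longrightarrow> hd xs \<in> V"
  by (cases xs) (auto simp: walk_def)

lemma walk_set: "walk V E xs \<Longrightarrow> set xs \<subseteq> V" by (simp add: walk_def)

lemma walk_append: "walk V E (xs @ [x]) \<Longrightarrow> walk V E (x # ys) \<Longrightarrow> walk V E (xs @ x # ys)"
proof (induction xs)
  case Nil then show ?case by simp
next
  case (Cons a xs)
  show ?case
  proof (cases xs)
    case Nil
    then show ?thesis using Cons.prems by (simp add: walk_Cons2)
  next
    case (Cons b zs)
    then show ?thesis using Cons.prems Cons.IH by (simp add: walk_Cons2)
  qed
qed

lemma walk_prefix: "walk V E (xs @ ys) \<Longrightarrow> xs \<noteq> [] \<Longrightarrow> walk V E xs"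
proof (induction xs)
  case Nil then show ?case by simp
next
  case (Cons a xs)
  show ?case
  proof (cases xs)
    case Nil
    then show ?thesis using Cons.prems by (auto simp: walk_def)
  next
    case (Cons b zs)
    then show ?thesis using Cons.prems Cons.IH by (simp add: walk_Cons2)
  qed
qed

lemma walk_suffix: "walk V E (xs @ ys) \<Longrightarrow> ys \<noteq> [] \<Longrightarrow> walk V E ys"
proof (induction xs)
  case Nil then show ?case by simp
next
  case (Cons a xs)
  have "walk V E (xs @ ys)" using walk_ConsD[of V E a "xs @ ys"] Cons.prems by auto
  then show ?case using Cons.IH Cons.prems by simp
qed

lemma walk_rev: assumes sym: "\<And>u v. E u v \<Longrightarrow> E v u"
  shows "walk V E xs \<Longrightarrow> walk V E (rev xs)"
proof (induction xs)
  case Nil then show ?case by simp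
next
  case (Cons a xs)
  show ?case
  proof (cases xs)
    case Nil
    then show ?thesis using Cons.prems by simp
  next
    case (Cons b zs)
    have w: "walk V E (rev xs)" and e: "E a b" and aV: "a \<in> V"
      using Cons.prems Cons.IH Cons by (auto simp: walk_Cons2)
    have "rev xs = rev zs @ [b]" using Cons by simp
    then have "walk V E (rev zs @ [b] @ [a])"
      using walk_append[of V E "rev zs" b "[a]"] w sym[OF e] aV walk_set[OF w] \<open>rev xs = rev zs @ [b]\<close>
      by (simp add: walk_Cons2)
    then show ?thesis using Cons by simp
  qed
qed

lemma distinct_walk:
  "walk V E xs \<Longrightarrow> \<exists>ys. walk V E ys \<and> distinct ys \<and> hd ys = hd xs \<and> last ys = last xs \<and> set ys \<subseteq> set xs"
proof (induction "length xs" arbitrary: xs rule: less_induct)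
  case less
  show ?case
  proof (cases "distinct xs")
    case True
    then show ?thesis using less.prems by (intro exI[of _ xs]) simp
  next
    case False
    from not_distinct_decomp[OF False] obtain as x bs cs where
      xs: "xs = as @ [x] @ bs @ [x] @ cs" by metis
    define xs' where "xs' = as @ x # cs"
    have w1: "walk V E (as @ [x])" using walk_prefix[of V E "as @ [x]" "bs @ [x] @ cs"] less.prems xs by simp
    have w2: "walk V E (x # cs)" using walk_suffix[of V E "as @ [x] @ bs" "x # cs"] less.prems xs by simp
    have w: "walk V E xs'" unfolding xs'_def by (rule walk_append[OF w1 w2])
    have len: "length xs' < length xs" unfolding xs'_def xs by simp
    obtain ys where ys: "walk V E ys" "distinct ys" "hd ys = hd xs'" "last ys = last xs'" "set ys \<subseteq> set xs'"
      using less.hyps[OF len w] by auto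
    have "hd xs' = hd xs" unfolding xs'_def xs by (cases as) auto
    moreover have "last xs' = last xs" unfolding xs'_def xs by (cases cs) auto
    moreover have "set xs' \<subseteq> set xs" unfolding xs'_def xs by auto
    ultimately show ?thesis using ys by (intro exI[of _ ys]) auto
  qed
qed

lemma sep:
  assumes nc: "\<not> has_cycle V E" and sym: "\<And>u v. E u v \<Longrightarrow> E v u"
    and ets: "E t s"
    and p1: "walk V E p1" "hd p1 = s" "last p1 = w" "t \<notin> set p1"
    and p2: "walk V E p2" "hd p2 = t" "last p2 = w" "s \<notin> set p2"
  shows False
proof -
  obtain q1 where q1: "walk V E q1" "distinct q1" "hd q1 = s" "last q1 = w" "set q1 \<subseteq> set p1"
    using distinct_walk[OF p1(1)] p1 by auto
  obtain q2 where q2: "walk V E q2" "distinct q2" "hd q2 = t" "last q2 = w" "set q2 \<subseteq> set p2"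
    using distinct_walk[OF p2(1)] p2 by auto
  define r2 where "r2 = rev q2"
  have r2: "walk V E r2" "distinct r2" "hd r2 = w" "last r2 = t" "s \<notin> set r2"
    using q2 p2 walk_rev[OF sym q2(1)] unfolding r2_def
    by (auto simp: hd_rev last_rev)
  have q1ne: "q1 \<noteq> []" and r2ne: "r2 \<noteq> []" using q1(1) r2(1) by (auto simp: walk_def)
  have tq1: "t \<notin> set q1" using q1(5) p1(4) by auto
  have "\<exists>x\<in>set q1. x \<in> set r2" using q1ne r2ne q1(4) r2(3)
    by (metis hd_in_set last_in_set)
  then obtain ys x zs where sp: "q1 = ys @ x # zs" "x \<in> set r2" "\<forall>y\<in>set ys. y \<notin> set r2"
    using split_list_first_prop[of q1 "\<lambda>x. x \<in> set r2"] by blast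
  obtain as bs where sp2: "r2 = as @ x # bs" using sp(2) split_list by metis
  have ysne: "ys \<noteq> []"
  proof
    assume "ys = []"
    then have "x = s" using sp(1) q1(3) by simp
    then show False using sp(2) r2(5) by simp
  qed
  have bsne: "bs \<noteq> []"
  proof
    assume "bs = []"
    then have "x = t" using sp2 r2(4) by simp
    then show False using tq1 sp(1) by simp
  qed
  define cyc where "cyc = ys @ x # bs"
  have wc: "walk V E cyc" unfolding cyc_def
  proof (rule walk_append)
    show "walk V E (ys @ [x])" using walk_prefix[of V E "ys @ [x]" zs] q1(1) sp(1) by simp
    show "walk V E (x # bs)" using walk_suffix[of V E as "x # bs"] r2(1) sp2 by simp
  qed
  have dc: "distinct cyc" unfolding cyc_def
    using q1(2) r2(2) sp sp2 by auto
  have hc: "hd cyc = s" unfolding cyc_def using ysne sp(1) q1(3) by (cases ys) auto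
  have lc: "last cyc = t" unfolding cyc_def using bsne sp2 r2(4) by simp
  have len: "length cyc \<ge> 3" unfolding cyc_def using ysne bsne
    by (cases ys; cases bs) auto
  have "has_cycle V E" unfolding has_cycle_def
    using wc dc hc lc len ets by auto
  then show False using nc by simp
qed


definition side :: "'a set \<Rightarrow> ('a \<Rightarrow> 'a \<Rightarrow> bool) \<Rightarrow> 'a \<Rightarrow> 'a \<Rightarrow> 'a set" where
  "side V E t s = {v. \<exists>xs. walk V E xs \<and> hd xs = s \<and> last xs = v \<and> t \<notin> set xs}"

lemma side_subV: "side V E t s \<subseteq> V"
proof
  fix v assume "v \<in> side V E t s"
  then obtain xs where xs: "walk V E xs" "last xs = v" unfolding side_def by auto
  have "xs \<noteq> []" using xs(1) by auto
  then have "v \<in> set xs" using xs(2) last_in_set by blast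
  then show "v \<in> V" using walk_set[OF xs(1)] by auto
qed

lemma self_in_side: "s \<in> V \<Longrightarrow> t \<noteq> s \<Longrightarrow> s \<in> side V E t s"
  unfolding side_def by (intro CollectI exI[of _ "[s]"]) simp

lemma notin_side: "s \<notin> side V E s c"
proof
  assume "s \<in> side V E s c"
  then obtain xs where xs: "walk V E xs" "last xs = s" "s \<notin> set xs" unfolding side_def by auto
  have "xs \<noteq> []" using xs(1) by auto
  then show False using xs last_in_set by metis
qed

lemma side_sub:
  assumes nc: "\<not> has_cycle V E" and sym: "\<And>u v. E u v \<Longrightarrow> E v u"
    and ets: "E t s" and esc: "E s c" and ct: "c \<noteq> t" and sV: "s \<in> V" and cV: "c \<in> V" and ts: "t \<noteq> s"
  shows "side V E s c \<subseteq> side V E t s"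
proof
  fix v assume "v \<in> side V E s c"
  then obtain xs where xs: "walk V E xs" "hd xs = c" "last xs = v" "s \<notin> set xs"
    unfolding side_def by auto
  have xsne: "xs \<noteq> []" using xs(1) by auto
  have tx: "t \<notin> set xs"
  proof
    assume "t \<in> set xs"
    then obtain as bs where sp: "xs = as @ t # bs" by (metis split_list)
    have asne: "as \<noteq> []" using sp xs(2) ct by (cases as) auto
    have wp: "walk V E (as @ [t])" using walk_prefix[of V E "as @ [t]" bs] xs(1) sp by simp
    have w2: "walk V E (rev (as @ [t]))" by (rule walk_rev[OF sym wp])
    have w1: "walk V E [s, c]" using sV cV esc by (simp add: walk_Cons2)
    show False
    proof (rule sep[OF nc sym ets w1 _ _ _ w2])
      show "hd [s, c] = s" by simp
      show "last [s, c] = c" by simp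
      show "t \<notin> set [s, c]" using ct ts by auto
      show "hd (rev (as @ [t])) = t" by simp
      show "last (rev (as @ [t])) = c" using asne sp xs(2) by (simp add: last_rev)
      show "s \<notin> set (rev (as @ [t]))" using xs(4) sp ts by auto
    qed
  qed
  have "walk V E (s # xs)" using walk_Cons_hd[OF xs(1) sV] esc xs(2) by simp
  moreover have "hd (s # xs) = s" by simp
  moreover have "last (s # xs) = v" using xsne xs(3) by simp
  moreover have "t \<notin> set (s # xs)" using tx ts by simp
  ultimately show "v \<in> side V E t s" unfolding side_def by blast
qed

lemma side_decomp:
  assumes v: "v \<in> side V E t s" and vs: "v \<noteq> s"
  shows "\<exists>c. c \<in> V \<and> E s c \<and> c \<noteq> t \<and> v \<in> side V E s c"
proof -
  obtain xs where xs: "walk V E xs" "hd xs = s" "last xs = v" "t \<notin> set xs"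
    using v unfolding side_def by auto
  have "s \<in> set xs" using xs(1) xs(2) by (cases xs) auto
  then obtain as bs where sp: "xs = as @ s # bs" "s \<notin> set bs" using split_list_last by metis
  have bsne: "bs \<noteq> []" using sp xs(3) vs by auto
  have w: "walk V E (s # bs)" using walk_suffix[of V E as "s # bs"] xs(1) sp by simp
  from walk_ConsD[OF w bsne] have wb: "walk V E bs" and e: "E s (hd bs)" by auto
  have "hd bs \<in> V" using walk_hd_in[OF wb] .
  moreover have "hd bs \<noteq> t" using xs(4) sp bsne by (metis Un_iff hd_in_set list.set_intros(2) set_append)
  moreover have "v \<in> side V E s (hd bs)" unfolding side_def
    using wb sp xs(3) bsne by (intro CollectI exI[of _ bs]) auto
  ultimately show ?thesis using e by blast
qed

lemma zero_side:
  fixes f :: "'a \<Rightarrow> complex"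
  assumes fin: "finite V" and nc: "\<not> has_cycle V E" and sym: "\<And>u v. E u v \<Longrightarrow> E v u"
    and irr: "\<And>v. \<not> E v v"
    and eq: "\<And>u. u \<in> V \<Longrightarrow> of_nat (degree V E u) * f u - (\<Sum>w\<in>{w\<in>V. E u w}. f w) = f u"
    and lf: "\<And>v. pendant V E v \<Longrightarrow> v \<notin> H \<Longrightarrow> f v = 0"
  shows "E t s \<Longrightarrow> t \<in> V \<Longrightarrow> s \<in> V \<Longrightarrow> side V E t s \<inter> H = {} \<Longrightarrow> f t = 0 \<and> (\<forall>v\<in>side V E t s. f v = 0)"
proof (induction "card (side V E t s)" arbitrary: t s rule: less_induct)
  case less
  have ts: "t \<noteq> s" using less.prems(1) irr by auto
  have sside: "s \<in> side V E t s" using self_in_side[OF less.prems(3) ts] .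
  have sH: "s \<notin> H" using sside less.prems(4) by auto
  define C where "C = {c \<in> V. E s c \<and> c \<noteq> t}"
  have nb: "{w\<in>V. E s w} = insert t C" unfolding C_def using less.prems sym by auto
  have tC: "t \<notin> C" unfolding C_def by simp
  have finC: "finite C" unfolding C_def using fin by simp
  have IH: "f s = 0 \<and> (\<forall>v\<in>side V E s c. f v = 0)" if c: "c \<in> C" for c
  proof -
    have cV: "c \<in> V" and esc: "E s c" and ct: "c \<noteq> t" using c unfolding C_def by auto
    have sub: "side V E s c \<subseteq> side V E t s"
      by (rule side_sub[OF nc sym less.prems(1) esc ct less.prems(3) cV ts])
    have psub: "side V E s c \<subset> side V E t s" using sub sside notin_side[of s V E c] by auto
    have "finite (side V E t s)" using side_subV[of V E t s] fin finite_subset by blast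
    then have lt: "card (side V E s c) < card (side V E t s)" using psub by (rule psubset_card_mono)
    show ?thesis using less.hyps[OF lt esc less.prems(3) cV] sub less.prems(4) by auto
  qed
  have zC: "\<forall>c\<in>C. f c = 0"
  proof
    fix c assume c: "c \<in> C"
    have "c \<noteq> s" using c irr unfolding C_def by auto
    hence "c \<in> side V E s c" using self_in_side[of c V s E] c unfolding C_def by auto
    thus "f c = 0" using IH[OF c] by auto
  qed
  have fs: "f s = 0"
  proof (cases "C = {}")
    case True
    then have "degree V E s = 1" unfolding degree_def using nb by simp
    then have "pendant V E s" unfolding pendant_def using less.prems(3) by simp
    then show ?thesis using lf sH by simp
  next
    case False
    then obtain c where "c \<in> C" by auto
    then show ?thesis using IH by auto
  qed
  have sumC: "(\<Sum>w\<in>C. f w) = 0" using zC by simp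
  have "(\<Sum>w\<in>{w\<in>V. E s w}. f w) = f t + (\<Sum>w\<in>C. f w)" unfolding nb using finC tC by simp
  then have "(\<Sum>w\<in>{w\<in>V. E s w}. f w) = f t" using sumC by simp
  then have ft: "f t = 0" using eq[OF less.prems(3)] fs by simp
  have "\<forall>v\<in>side V E t s. f v = 0"
  proof
    fix v assume v: "v \<in> side V E t s"
    show "f v = 0"
    proof (cases "v = s")
      case True then show ?thesis using fs by simp
    next
      case False
      then obtain c where c: "c \<in> V" "E s c" "c \<noteq> t" "v \<in> side V E s c" using side_decomp[OF v] by blast
      then have "c \<in> C" unfolding C_def by simp
      then show ?thesis using IH c(4) by auto
    qed
  qed
  then show ?case using ft by simp
qed



definition pos :: "'a::linorder set \<Rightarrow> 'a \<Rightarrow> nat" where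
  "pos W w = (THE j. j < card W \<and> sorted_list_of_set W ! j = w)"

lemma pos_nth: assumes "finite W" "i < card W" shows "pos W (sorted_list_of_set W ! i) = i"
proof -
  let ?xs = "sorted_list_of_set W"
  have d: "distinct ?xs" and l: "length ?xs = card W" using assms by auto
  show ?thesis unfolding pos_def
  proof (rule the_equality)
    show "i < card W \<and> ?xs ! i = ?xs ! i" using assms by simp
  next
    fix j assume "j < card W \<and> ?xs ! j = ?xs ! i"
    then show "j = i" using nth_eq_iff_index_eq[OF d, of j i] l assms by auto
  qed
qed

lemma nth_pos: assumes "finite W" "w \<in> W" shows "pos W w < card W \<and> sorted_list_of_set W ! pos W w = w"
proof -
  let ?xs = "sorted_list_of_set W"
  have "w \<in> set ?xs" using assms by simp
  then obtain i where i: "i < length ?xs" "?xs ! i = w" by (metis in_set_conv_nth)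
  have l: "length ?xs = card W" using assms by auto
  show ?thesis using pos_nth[OF assms(1), of i] i l by auto
qed

lemma nth_sorted_in: "finite W \<Longrightarrow> i < card W \<Longrightarrow> sorted_list_of_set W ! i \<in> W"
  by (metis length_sorted_list_of_set nth_mem set_sorted_list_of_set)

lemma lap_row:
  fixes W :: "'a::linorder set"
  assumes fin: "finite W" and irr: "\<And>v. \<not> E v v" and v: "(v :: complex vec) \<in> carrier_vec (card W)"
    and i: "i < card W"
  shows "(of_real_hom.mat_hom (laplacian W E) *\<^sub>v v) $ i =
    of_nat (degree W E (sorted_list_of_set W ! i)) * v $ i
    - (\<Sum>w\<in>{w\<in>W. E (sorted_list_of_set W ! i) w}. v $ pos W w)"
proof -
  let ?xs = "sorted_list_of_set W"
  let ?n = "card W"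
  let ?u = "?xs ! i"
  have d: "distinct ?xs" and l: "length ?xs = ?n" using fin by auto
  have "(of_real_hom.mat_hom (laplacian W E) *\<^sub>v v) $ i
      = (\<Sum>j\<in>{0..<?n}. complex_of_real (laplacian W E $$ (i, j)) * v $ j)"
    using i v unfolding laplacian_def Let_def by (simp add: scalar_prod_def row_def)
  also have "\<dots> = (\<Sum>j\<in>{0..<?n}. (if j = i then of_nat (degree W E ?u) * v $ j else 0)
        + (if E ?u (?xs ! j) then - v $ j else 0))"
    using i irr unfolding laplacian_def Let_def by (intro sum.cong refl) auto
  also have "\<dots> = of_nat (degree W E ?u) * v $ i + (\<Sum>j\<in>{0..<?n}. (if E ?u (?xs ! j) then - v $ j else 0))"
    using i by (simp add: sum.distrib sum.delta')
  also have "(\<Sum>j\<in>{0..<?n}. (if E ?u (?xs ! j) then - v $ j else 0)) = - (\<Sum>j\<in>{j\<in>{0..<?n}. E ?u (?xs ! j)}. v $ j)"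
    by (simp add: sum.inter_filter[symmetric] sum_negf)
  also have "(\<Sum>j\<in>{j\<in>{0..<?n}. E ?u (?xs ! j)}. v $ j) = (\<Sum>w\<in>{w\<in>W. E ?u w}. v $ pos W w)"
  proof -
    have bij: "bij_betw (nth ?xs) {j\<in>{0..<?n}. E ?u (?xs ! j)} {w\<in>W. E ?u w}"
    proof (rule bij_betw_imageI)
      show "inj_on (nth ?xs) {j\<in>{0..<?n}. E ?u (?xs ! j)}"
        using d l by (auto simp: inj_on_def nth_eq_iff_index_eq)
      show "nth ?xs ` {j\<in>{0..<?n}. E ?u (?xs ! j)} = {w\<in>W. E ?u w}"
      proof (rule subset_antisym; rule subsetI)
        fix w assume "w \<in> nth ?xs ` {j\<in>{0..<?n}. E ?u (?xs ! j)}"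
        then show "w \<in> {w\<in>W. E ?u w}" using nth_sorted_in[OF fin] by auto
      next
        fix w assume w: "w \<in> {w\<in>W. E ?u w}"
        have "pos W w \<in> {j\<in>{0..<?n}. E ?u (?xs ! j)}" using nth_pos[OF fin, of w] w by auto
        moreover have "w = ?xs ! pos W w" using nth_pos[OF fin, of w] w by auto
        ultimately show "w \<in> nth ?xs ` {j\<in>{0..<?n}. E ?u (?xs ! j)}" by blast
      qed
    qed
    have "(\<Sum>j\<in>{j\<in>{0..<?n}. E ?u (?xs ! j)}. v $ j) = (\<Sum>j\<in>{j\<in>{0..<?n}. E ?u (?xs ! j)}. v $ pos W (?xs ! j))"
      using pos_nth[OF fin] by (intro sum.cong refl) auto
    also have "\<dots> = (\<Sum>w\<in>{w\<in>W. E ?u w}. v $ pos W w)"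
      by (rule sum.reindex_bij_betw[OF bij])
    finally show ?thesis .
  qed
  finally show ?thesis by simp
qed


theorem mainTheorem12:
  fixes V :: "'a::linorder set" and E :: "'a \<Rightarrow> 'a \<Rightarrow> bool" and u1 u2 u3 :: 'a
  assumes tree: "is_tree V E"
    and p3: "card {v. pendant V E v} \<ge> 3"
    and pend: "pendant V E u1" "pendant V E u2" "pendant V E u3"
    and dist: "u1 \<noteq> u2" "u1 \<noteq> u3" "u2 \<noteq> u3"
    and mult: "lap_mult V E 1 \<ge> card {v. pendant V E v} - 2"
  shows "lap_mult (path_vertices V E u1 u2 \<union> path_vertices V E u1 u3 \<union> path_vertices V E u2 u3) E 1 \<ge> 1"
proof (rule ccontr)
  define H where "H = path_vertices V E u1 u2 \<union> path_vertices V E u1 u3 \<union> path_vertices V E u2 u3"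
  assume neg: "\<not> lap_mult (path_vertices V E u1 u2 \<union> path_vertices V E u1 u3 \<union> path_vertices V E u2 u3) E 1 \<ge> 1"
  hence ord0: "Polynomial.order 1 (char_poly (laplacian H E)) = 0"
    unfolding H_def lap_mult_def by simp
  have fin: "finite V" and sym: "\<And>u v. E u v \<Longrightarrow> E v u" and irr: "\<And>v. \<not> E v v"
    and conn: "connected_graph V E" and nc: "\<not> has_cycle V E"
    using tree unfolding is_tree_def simple_graph_def by auto
  have uV: "u1 \<in> V" "u2 \<in> V" "u3 \<in> V" using pend unfolding pendant_def by auto
  have pv_sub: "path_vertices V E a b \<subseteq> V" for a b
  proof
    fix x assume "x \<in> path_vertices V E a b"
    then obtain xs where "walk V E xs" "x \<in> set xs" unfolding path_vertices_def by blast
    then show "x \<in> V" using walk_set by blast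
  qed
  have HV: "H \<subseteq> V" unfolding H_def using pv_sub by auto
  have finH: "finite H" using HV fin finite_subset by blast
  have pv_ex: "\<exists>ys. walk V E ys \<and> distinct ys \<and> hd ys = a \<and> last ys = b" if "a \<in> V" "b \<in> V" for a b
  proof -
    have "\<forall>u\<in>V. \<forall>v\<in>V. \<exists>xs. walk V E xs \<and> hd xs = u \<and> last xs = v" using conn unfolding connected_graph_def by simp
    then have "\<exists>xs. walk V E xs \<and> hd xs = a \<and> last xs = b" using that by simp
    then obtain xs where "walk V E xs" "hd xs = a" "last xs = b" by auto
    then show ?thesis using distinct_walk[of V E xs] by auto
  qed
  have pv_wit: "set ys \<subseteq> path_vertices V E a b"
    if "walk V E ys" "distinct ys" "hd ys = a" "last ys = b" for ys a b
    unfolding path_vertices_def using that by blast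
  define CH where "CH a b \<longleftrightarrow> (\<exists>xs. walk V E xs \<and> hd xs = a \<and> last xs = b \<and> set xs \<subseteq> H)" for a b
  have CH_sym: "CH b a" if ch: "CH a b" for a b
  proof -
    obtain xs where xs: "walk V E xs" "hd xs = a" "last xs = b" "set xs \<subseteq> H" using ch unfolding CH_def by blast
    have "xs \<noteq> []" using xs(1) by auto
    then show ?thesis unfolding CH_def using walk_rev[OF sym xs(1)] xs
      by (intro exI[of _ "rev xs"]) (auto simp: hd_rev last_rev)
  qed
  have CH_trans: "CH a c" if ch1: "CH a b" and ch2: "CH b c" for a b c
  proof -
    obtain xs where xs: "walk V E xs" "hd xs = a" "last xs = b" "set xs \<subseteq> H" using ch1 unfolding CH_def by blast
    obtain ys where ys: "walk V E ys" "hd ys = b" "last ys = c" "set ys \<subseteq> H" using ch2 unfolding CH_def by blast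
    have xne: "xs \<noteq> []" and yne: "ys \<noteq> []" using xs(1) ys(1) by auto
    obtain as where as: "xs = as @ [b]" using xne xs(3) append_butlast_last_id by metis
    obtain bs where bs: "ys = b # bs" using yne ys(2) by (cases ys) auto
    have w: "walk V E (as @ b # bs)" using walk_append[of V E as b bs] xs(1) ys(1) as bs by simp
    have "hd (as @ b # bs) = a" using xs(2) as by (cases as) auto
    moreover have "last (as @ b # bs) = c" using ys(3) bs by (cases bs) auto
    moreover have "set (as @ b # bs) \<subseteq> H" using xs(4) ys(4) as bs by auto
    ultimately show ?thesis unfolding CH_def using w by (intro exI[of _ "as @ b # bs"]) auto
  qed
  have CH_path: "CH a x" if x: "x \<in> path_vertices V E a b" and sub: "path_vertices V E a b \<subseteq> H" for a b x
  proof -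
    obtain ys where ys: "walk V E ys" "distinct ys" "hd ys = a" "last ys = b" "x \<in> set ys"
      using x unfolding path_vertices_def by blast
    have ysP: "set ys \<subseteq> path_vertices V E a b" using pv_wit ys by blast
    obtain as bs where sp: "ys = as @ x # bs" using ys(5) split_list by metis
    have w: "walk V E (as @ [x])" using walk_prefix[of V E "as @ [x]" bs] ys(1) sp by simp
    have "hd (as @ [x]) = a" using ys(3) sp by (cases as) auto
    moreover have "set (as @ [x]) \<subseteq> H" using ysP sub sp by auto
    ultimately show ?thesis unfolding CH_def using w by (intro exI[of _ "as @ [x]"]) auto
  qed
  obtain y12 where y12: "walk V E y12" "distinct y12" "hd y12 = u1" "last y12 = u2" using pv_ex uV by blast
  obtain y13 where y13: "walk V E y13" "distinct y13" "hd y13 = u1" "last y13 = u3" using pv_ex uV by blast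
  have P12: "path_vertices V E u1 u2 \<subseteq> H" and P13: "path_vertices V E u1 u3 \<subseteq> H"
    and P23: "path_vertices V E u2 u3 \<subseteq> H" unfolding H_def by auto
  have y12ne: "y12 \<noteq> []" and y13ne: "y13 \<noteq> []" using y12(1) y13(1) by auto
  have u2P: "u2 \<in> path_vertices V E u1 u2" using pv_wit[OF y12] y12(4) y12ne last_in_set by blast
  have u1P: "u1 \<in> path_vertices V E u1 u2" using pv_wit[OF y12] y12(3) y12ne hd_in_set by blast
  have u3P: "u3 \<in> path_vertices V E u1 u3" using pv_wit[OF y13] y13(4) y13ne last_in_set by blast
  have uH: "u1 \<in> H" "u2 \<in> H" "u3 \<in> H" using u1P u2P u3P P12 P13 by auto
  have CH12: "CH u1 u2" using CH_path[OF u2P P12] .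
  have CH_u1: "CH u1 x" if xH: "x \<in> H" for x
  proof -
    consider "x \<in> path_vertices V E u1 u2" | "x \<in> path_vertices V E u1 u3" | "x \<in> path_vertices V E u2 u3"
      using xH unfolding H_def by blast
    then show ?thesis
    proof cases
      case 1 then show ?thesis using CH_path P12 by blast
    next
      case 2 then show ?thesis using CH_path P13 by blast
    next
      case 3 then show ?thesis using CH_path[OF 3 P23] CH12 CH_trans by blast
    qed
  qed
  have CH_any: "CH a b" if "a \<in> H" "b \<in> H" for a b
    using CH_trans[OF CH_sym[OF CH_u1[OF that(1)]] CH_u1[OF that(2)]] .
  have side_disj: "side V E h s \<inter> H = {}" if h: "h \<in> H" and s: "s \<notin> H" and ehs: "E h s" for h s
  proof (rule ccontr)
    assume "side V E h s \<inter> H \<noteq> {}"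
    then obtain g where g: "g \<in> side V E h s" "g \<in> H" by auto
    obtain p1 where p1: "walk V E p1" "hd p1 = s" "last p1 = g" "h \<notin> set p1"
      using g(1) unfolding side_def by blast
    obtain p2 where p2: "walk V E p2" "hd p2 = h" "last p2 = g" "set p2 \<subseteq> H"
      using CH_any[OF h g(2)] unfolding CH_def by blast
    have "s \<notin> set p2" using p2(4) s by auto
    then show False using sep[OF nc sym ehs p1 p2(1-3)] by simp
  qed
  have out_side: "\<exists>h s. h \<in> H \<and> s \<in> V \<and> s \<notin> H \<and> E h s \<and> x \<in> side V E h s"
    if x: "x \<in> V" "x \<notin> H" for x
  proof -
    have "\<forall>u\<in>V. \<forall>v\<in>V. \<exists>xs. walk V E xs \<and> hd xs = u \<and> last xs = v" using conn unfolding connected_graph_def by simp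
    then have "\<exists>xs. walk V E xs \<and> hd xs = x \<and> last xs = u1" using x uV by simp
    then obtain q where q: "walk V E q" "hd q = x" "last q = u1" by auto
    have qne: "q \<noteq> []" using q(1) by auto
    have "\<exists>y\<in>set q. y \<in> H" using q(3) qne uH(1) last_in_set by metis
    then obtain ys h zs where sp: "q = ys @ h # zs" "h \<in> H" "\<forall>y\<in>set ys. y \<notin> H"
      using split_list_first_prop[of q "\<lambda>y. y \<in> H"] by blast
    have ysne: "ys \<noteq> []" using sp q(2) x(2) by (cases ys) auto
    define s where "s = last ys"
    have wys: "walk V E (ys @ [h])" using walk_prefix[of V E "ys @ [h]" zs] q(1) sp(1) by simp
    have ys': "ys @ [h] = butlast ys @ [s, h]" unfolding s_def using ysne by simp
    have "walk V E [s, h]" using walk_suffix[of V E "butlast ys" "[s, h]"] wys ys' by simp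
    then have sV: "s \<in> V" and esh: "E s h" by (auto simp: walk_Cons2)
    have sH: "s \<notin> H" using sp(3) ysne unfolding s_def by simp
    have wr: "walk V E (rev ys)" using walk_rev[OF sym walk_prefix[OF wys ysne]] .
    have "x \<in> side V E h s" unfolding side_def
      using wr ysne sp q(2) sH s_def sp(2)
      by (intro CollectI exI[of _ "rev ys"]) (auto simp: hd_rev last_rev)
    then show ?thesis using sp(2) sV sH sym[OF esh] by blast
  qed
  define Pd where "Pd = {v. pendant V E v}"
  define Lf where "Lf = Pd - H"
  have finPd: "finite Pd" unfolding Pd_def pendant_def using fin by simp
  have sub3: "{u1, u2, u3} \<subseteq> Pd \<inter> H" using pend uH unfolding Pd_def by auto
  have c3: "card {u1, u2, u3} = 3" using dist by simp
  have finPH: "finite (Pd \<inter> H)" using finPd by simp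
  have "card (Pd \<inter> H) \<ge> 3" using card_mono[OF finPH sub3] c3 by simp
  hence cLf: "card Lf \<le> card Pd - 3" unfolding Lf_def using card_Diff_subset_Int finPd
    by (simp add: card_Diff_subset_Int)
  define S where "S = pos V ` Lf"
  have cS: "card S \<le> card Lf" unfolding S_def by (rule card_image_le) (simp add: Lf_def finPd)
  have SV: "S \<subseteq> {..<card V}" unfolding S_def Lf_def Pd_def pendant_def using nth_pos[OF fin] by auto
  let ?L = "laplacian V E"
  let ?n = "card V"
  have Lc: "?L \<in> carrier_mat ?n ?n" unfolding laplacian_def Let_def by simp
  have Lsym: "\<And>i j. i < ?n \<Longrightarrow> j < ?n \<Longrightarrow> ?L $$ (i, j) = ?L $$ (j, i)"
    unfolding laplacian_def Let_def using sym by auto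
  have "Polynomial.order 1 (char_poly ?L) \<le> card S"
  proof (rule LA_main[OF Lc Lsym SV])
    fix v :: "complex vec"
    assume v: "v \<in> carrier_vec ?n" and ev: "of_real_hom.mat_hom ?L *\<^sub>v v = v" and vS: "\<forall>i\<in>S. v $ i = 0"
    define f where "f w = v $ pos V w" for w
    have eqT: "of_nat (degree V E u) * f u - (\<Sum>w\<in>{w\<in>V. E u w}. f w) = f u" if u: "u \<in> V" for u
    proof -
      have pu: "pos V u < ?n" "sorted_list_of_set V ! pos V u = u" using nth_pos[OF fin u] by auto
      have "(of_real_hom.mat_hom ?L *\<^sub>v v) $ pos V u = v $ pos V u" using ev by simp
      then show ?thesis using lap_row[where W=V and E=E, OF fin irr v pu(1)] pu(2) unfolding f_def by simp
    qed
    have lf: "f w = 0" if "pendant V E w" "w \<notin> H" for w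
    proof -
      have "w \<in> Lf" using that unfolding Lf_def Pd_def by simp
      then show ?thesis using vS unfolding S_def f_def by auto
    qed
    have zs: "f t = 0 \<and> (\<forall>x\<in>side V E t s. f x = 0)"
      if "E t s" "t \<in> V" "s \<in> V" "side V E t s \<inter> H = {}" for t s
      by (rule zero_side[OF fin nc sym irr eqT lf that])
    have zout: "f x = 0" if xx: "x \<in> V" "x \<notin> H" for x
    proof -
      obtain h s where hs: "h \<in> H" "s \<in> V" "s \<notin> H" "E h s" "x \<in> side V E h s" using out_side[OF xx] by blast
      show ?thesis using zs[OF hs(4) _ hs(2) side_disj[OF hs(1) hs(3) hs(4)]] hs(1) HV hs(5) by auto
    qed
    have zatt: "f h = 0" if "h \<in> H" "s \<in> V" "s \<notin> H" "E h s" for h s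
      using zs[OF that(4) _ that(2) side_disj[OF that(1) that(3) that(4)]] that(1) HV by auto
    have eqH: "of_nat (degree H E h) * f h - (\<Sum>w\<in>{w\<in>H. E h w}. f w) = f h" if h: "h \<in> H" for h
    proof (cases "\<exists>s\<in>V. s \<notin> H \<and> E h s")
      case True
      then obtain s where "s \<in> V" "s \<notin> H" "E h s" by blast
      then have fh: "f h = 0" using zatt h by blast
      have spl: "{w\<in>V. E h w} = {w\<in>H. E h w} \<union> {w\<in>V - H. E h w}" using HV by auto
      have "(\<Sum>w\<in>{w\<in>V. E h w}. f w) = (\<Sum>w\<in>{w\<in>H. E h w}. f w) + (\<Sum>w\<in>{w\<in>V - H. E h w}. f w)"
        unfolding spl by (rule sum.union_disjoint) (use fin finH in auto)
      also have "(\<Sum>w\<in>{w\<in>V - H. E h w}. f w) = 0" using zout by simp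
      finally have "(\<Sum>w\<in>{w\<in>V. E h w}. f w) = (\<Sum>w\<in>{w\<in>H. E h w}. f w)" by simp
      then show ?thesis using eqT[of h] h HV fh by auto
    next
      case False
      then have eqs: "{w\<in>V. E h w} = {w\<in>H. E h w}" using HV by auto
      have "degree V E h = degree H E h" unfolding degree_def eqs ..
      then show ?thesis using eqT[of h] h HV eqs by auto
    qed
    define xsH where "xsH = sorted_list_of_set H"
    define wH :: "complex vec" where "wH = vec (card H) (\<lambda>i. f (xsH ! i))"
    have wHc: "wH \<in> carrier_vec (card H)" unfolding wH_def by simp
    have wHpos: "wH $ pos H h = f h" if "h \<in> H" for h
      using nth_pos[OF finH that] unfolding wH_def xsH_def by simp
    have LH: "laplacian H E \<in> carrier_mat (card H) (card H)" unfolding laplacian_def Let_def by simp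
    have evH: "of_real_hom.mat_hom (laplacian H E) *\<^sub>v wH = wH"
    proof (rule eq_vecI)
      fix i assume "i < dim_vec wH"
      hence i: "i < card H" unfolding wH_def by simp
      have xi: "xsH ! i \<in> H" using nth_sorted_in[OF finH i] unfolding xsH_def .
      have "(of_real_hom.mat_hom (laplacian H E) *\<^sub>v wH) $ i
          = of_nat (degree H E (xsH ! i)) * wH $ i - (\<Sum>w\<in>{w\<in>H. E (xsH ! i) w}. wH $ pos H w)"
        using lap_row[where W=H and E=E, OF finH irr wHc i] unfolding xsH_def by simp
      also have "(\<Sum>w\<in>{w\<in>H. E (xsH ! i) w}. wH $ pos H w) = (\<Sum>w\<in>{w\<in>H. E (xsH ! i) w}. f w)"
        using wHpos by (intro sum.cong refl) auto
      also have "wH $ i = f (xsH ! i)" unfolding wH_def using i by simp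
      finally show "(of_real_hom.mat_hom (laplacian H E) *\<^sub>v wH) $ i = wH $ i"
        using eqH[OF xi] \<open>wH $ i = f (xsH ! i)\<close> by simp
    qed (use LH wHc in simp)
    have "char_poly (laplacian H E) \<noteq> 0"
      using degree_monic_char_poly[OF LH] by auto
    then have "poly (char_poly (laplacian H E)) 1 \<noteq> 0" using ord0 order_root by blast
    then have "poly (char_poly (of_real_hom.mat_hom (laplacian H E) :: complex mat)) 1 \<noteq> 0"
      unfolding of_real_hom.char_poly_hom[OF LH] of_real_hom.poly_map_poly_1 by simp
    then have "\<not> eigenvalue (of_real_hom.mat_hom (laplacian H E) :: complex mat) 1"
      using eigenvalue_root_char_poly[of "of_real_hom.mat_hom (laplacian H E) :: complex mat" "card H"] LH by simp
    then have wH0: "wH = 0\<^sub>v (card H)"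
      using evH wHc LH unfolding eigenvalue_def eigenvector_def by auto
    have zH: "f h = 0" if "h \<in> H" for h
      using wHpos[OF that] wH0 nth_pos[OF finH that] by simp
    show "v = 0\<^sub>v ?n"
    proof (rule eq_vecI)
      fix i assume "i < dim_vec (0\<^sub>v ?n :: complex vec)"
      hence i: "i < ?n" by simp
      have xi: "sorted_list_of_set V ! i \<in> V" using nth_sorted_in[OF fin i] .
      have "v $ i = f (sorted_list_of_set V ! i)" unfolding f_def using pos_nth[OF fin i] by simp
      also have "\<dots> = 0" using zH zout xi by blast
      finally show "v $ i = 0\<^sub>v ?n $ i" using i by simp
    qed (use v in simp)
  qed
  then have "lap_mult V E 1 \<le> card Pd - 3" unfolding lap_mult_def using cS cLf by simp
  then show False using mult p3 unfolding Pd_def by simp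
qed
end
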